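(* Let $r\in\mathbb N_0$ and let $x_0,\dots,x_r\in\mathbb R$ satisfy: (i) $\sum_{i=0}^rx_i=0$; (ii) $x_{r-i}=x_i$ for all $0\le i\le r$; (iii) there is an integer $n$ such that $x_i\ge0$ for $0\le i\le n$ and $x_i<0$ for $n<i\le\lfloor r/2\rfloor$. Let $f_0,\dots,f_r\in\mathbb R$ satisfy $0\le f_1-f_0\le f_2-f_1\le\dots\le f_r-f_{r-1}$. Then $\sum_{i=0}^rf_ix_i\ge0$. *)

theory Defs
  imports Main Complex_Main
begin

end

theory Submission
  imports Defs
begin

lemma mono_steps:
  fixes h :: "nat \<Rightarrow> real"
  assumes st: "\<And>j. a \<le> j \<Longrightarrow> j < b \<Longrightarrow> h j \<le> h (Suc j)"
    and "a \<le> u" "u \<le> v" "v \<le> b"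
  shows "h u \<le> h v"
  using assms(3,4)
proof (induction v rule: dec_induct)
  case base then show ?case by simp
next
  case (step k)
  then have "h k \<le> h (Suc k)" using st assms(2) by simp
  with step show ?case by simp
qed

theorem lemma10:
  fixes r :: nat and x f :: "nat \<Rightarrow> real" and n :: int
  assumes sum0: "(\<Sum>i=0..r. x i) = 0"
    and symm: "\<And>i. i \<le> r \<Longrightarrow> x (r - i) = x i"
    and nonneg: "\<And>i. i \<le> r \<Longrightarrow> int i \<le> n \<Longrightarrow> x i \<ge> 0"
    and neg: "\<And>i. n < int i \<Longrightarrow> i \<le> r div 2 \<Longrightarrow> x i < 0"
    and f0: "1 \<le> r \<Longrightarrow> 0 \<le> f 1 - f 0"
    and fconv: "\<And>i. 1 \<le> i \<Longrightarrow> i < r \<Longrightarrow> f i - f (i - 1) \<le> f (i + 1) - f i"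
  shows "(\<Sum>i=0..r. f i * x i) \<ge> 0"
proof -
  define g where "g i = (f i + f (r - i)) / 2" for i
  define d where "d j = f j - f (j - 1)" for j
  have dmono: "d u \<le> d v" if "1 \<le> u" "u \<le> v" "v \<le> r" for u v
    by (rule mono_steps[of 1 r d]) (use that fconv in \<open>auto simp: d_def\<close>)
  have gstep: "g (Suc i) \<le> g i" if "Suc i \<le> r div 2" for i
  proof -
    have "d (Suc i) \<le> d (r - i)" using that by (intro dmono) auto
    moreover have "r - i - 1 = r - Suc i" by simp
    ultimately show ?thesis unfolding g_def d_def by simp
  qed
  have ganti: "g v \<le> g u" if "u \<le> v" "v \<le> r div 2" for u v
    by (rule mono_steps[of 0 "r div 2" "\<lambda>i. - g i", simplified])
       (use that gstep in auto)
  have "(\<Sum>i=0..r. f i * x i) = (\<Sum>i=0..r. f (r - i) * x (r - i))"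
    using sum.atLeastAtMost_rev[of "\<lambda>i. f i * x i" 0 r] by simp
  also have "\<dots> = (\<Sum>i=0..r. f (r - i) * x i)"
    by (rule sum.cong) (auto simp: symm)
  finally have e1: "(\<Sum>i=0..r. f i * x i) = (\<Sum>i=0..r. f (r - i) * x i)" .
  have "(\<Sum>i=0..r. g i * x i) = ((\<Sum>i=0..r. f i * x i) + (\<Sum>i=0..r. f (r - i) * x i)) / 2"
    unfolding g_def by (simp add: sum_divide_distrib[symmetric] sum.distrib[symmetric] algebra_simps)
  with e1 have "(\<Sum>i=0..r. f i * x i) = (\<Sum>i=0..r. g i * x i)" by simp
  define m :: nat where "m = nat (max 0 (min n (int (r div 2))))"
  have mr: "m \<le> r div 2" unfolding m_def by auto
  have "(\<Sum>i=0..r. g i * x i) = (\<Sum>i=0..r. (g i - g m) * x i)"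
    by (simp add: algebra_simps sum_subtractf sum_distrib_left[symmetric] sum0)
  also have "\<dots> \<ge> 0"
  proof (rule sum_nonneg)
    fix i assume "i \<in> {0..r}"
    then have ir: "i \<le> r" by simp
    define k where "k = min i (r - i)"
    have kr: "k \<le> r div 2" "k \<le> r" unfolding k_def by auto
    have gk: "g k = g i" unfolding k_def g_def using ir by (auto simp: min_def)
    have xk: "x k = x i" unfolding k_def using symm ir by (auto simp: min_def)
    have "(g k - g m) * x k \<ge> 0"
    proof (cases "int k \<le> n")
      case True
      then have "k \<le> m" using kr unfolding m_def by auto
      then have "g m \<le> g k" using ganti mr by blast
      moreover have "x k \<ge> 0" using nonneg kr True by simp
      ultimately show ?thesis by simp
    next
      case False
      then have "m \<le> k" using kr unfolding m_def by auto
      then have "g k \<le> g m" using ganti kr by blast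
      moreover have "x k < 0" using neg kr False by simp
      ultimately show ?thesis by (simp add: mult_nonpos_nonpos)
    qed
    then show "(g i - g m) * x i \<ge> 0" using gk xk by simp
  qed
  finally show ?thesis using \<open>(\<Sum>i=0..r. f i * x i) = (\<Sum>i=0..r. g i * x i)\<close> by simp
qed

end
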